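(* Let $f=a_0+ a_{1}z+\cdots+a_m z^m\in \mathbb{Z}[z]$ be primitive (the greatest common divisor of its coefficients is $1$). Suppose there exist positive real numbers $\alpha<\beta$ and an index $j\in \{0,1,\ldots,m\}$ such that \[ |a_j| \alpha^j>\sum_{i=0,\, i\neq j}^{m} |a_i|\beta^{i}. \] If there exist natural numbers $n$ and $d$ with $\beta-d\geq n\geq \alpha+d$ such that either $|f(n)|/d$ is a prime, or $|f(n)|/d$ is a prime power coprime to $|f'(n)|$, then $f$ is irreducible in $\mathbb{Z}[z]$.
   Context: $f'$ denotes the derivative of $f$. Natural numbers are positive integers. *)

theory Defs
  imports "HOL-Computational_Algebra.Computational_Algebra"
begin

end

theory Submission
  imports Defs
begin

abbreviation cp :: "int poly \<Rightarrow> complex poly" where "cp p \<equiv> map_poly of_int p"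

lemma cp_deg: "degree (cp p) = degree p"
  by (rule degree_map_poly) simp

lemma cp_coeff: "coeff (cp p) i = of_int (coeff p i)"
  by (simp add: coeff_map_poly)

lemma cp_mult: "cp (p * q) = cp p * cp q"
  by (intro poly_eqI) (simp add: coeff_map_poly coeff_mult)

lemma cp_poly: "poly (cp p) z = (\<Sum>i\<le>degree p. of_int (coeff p i) * z ^ i)"
  by (simp add: poly_altdef[of "cp p"] cp_deg cp_coeff)

lemma cp_poly_int: "poly (cp p) (of_int x) = of_int (poly p x)"
  by (simp add: cp_poly poly_altdef[of p])

lemma roots_annulus:
  fixes f :: "int poly" and z :: complex
  assumes "j \<le> degree f"
    and dom: "\<bar>real_of_int (coeff f j)\<bar> * \<alpha> ^ j >
           (\<Sum>i\<in>{0..degree f} - {j}. \<bar>real_of_int (coeff f i)\<bar> * \<beta> ^ i)"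
    and "0 < \<alpha>" and root: "poly (cp f) z = 0"
  shows "norm z < \<alpha> \<or> norm z > \<beta>"
proof (rule ccontr)
  assume "\<not> ?thesis"
  hence za: "\<alpha> \<le> norm z" and zb: "norm z \<le> \<beta>" by auto
  define S where "S = (\<Sum>i\<in>{0..degree f} - {j}. of_int (coeff f i) * z ^ i :: complex)"
  have eq: "poly (cp f) z = of_int (coeff f j) * z ^ j + S"
    unfolding cp_poly S_def using assms(1)
    by (subst sum.remove[of _ j]) (auto simp: atLeast0AtMost)
  have "norm S \<le> (\<Sum>i\<in>{0..degree f} - {j}. norm (of_int (coeff f i) * z ^ i :: complex))"
    unfolding S_def by (rule norm_sum)
  also have "\<dots> \<le> (\<Sum>i\<in>{0..degree f} - {j}. \<bar>real_of_int (coeff f i)\<bar> * \<beta> ^ i)"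
  proof (rule sum_mono)
    fix i
    have "norm z ^ i \<le> \<beta> ^ i" by (rule power_mono[OF zb]) simp
    then show "norm (of_int (coeff f i) * z ^ i :: complex) \<le> \<bar>real_of_int (coeff f i)\<bar> * \<beta> ^ i"
      by (simp add: norm_mult norm_power mult_left_mono)
  qed
  finally have S: "norm S < \<bar>real_of_int (coeff f j)\<bar> * \<alpha> ^ j" using dom by linarith
  have "\<alpha> ^ j \<le> norm z ^ j" by (rule power_mono[OF za]) (use assms in auto)
  hence "\<bar>real_of_int (coeff f j)\<bar> * \<alpha> ^ j \<le> norm (of_int (coeff f j) * z ^ j :: complex)"
    by (simp add: norm_mult norm_power mult_left_mono)
  with S have "0 < norm (of_int (coeff f j) * z ^ j + S)"
    using norm_diff_ineq[of "of_int (coeff f j) * z ^ j :: complex" S] by linarith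
  with eq root show False by simp
qed

lemma prod_bound:
  fixes G :: "complex poly"
  assumes "\<forall>z. poly G z = 0 \<longrightarrow> d < norm (w - z)" "0 \<le> d" "0 < degree G"
  shows "norm (lead_coeff G) * d ^ degree G < norm (poly G w)"
  using assms
proof (induction "degree G" arbitrary: G)
  case 0
  then show ?case by simp
next
  case (Suc k G)
  have "\<not> constant (poly G)" using Suc.prems(3) by (simp add: constant_degree)
  then obtain z where z: "poly G z = 0" using fundamental_theorem_of_algebra by blast
  then have "[:-z, 1:] dvd G" by (simp add: poly_eq_0_iff_dvd)
  then obtain Q where Q: "G = [:-z, 1:] * Q" by (elim dvdE)
  have G0: "G \<noteq> 0" using Suc.prems(3) by auto
  hence Q0: "Q \<noteq> 0" using Q by auto
  have "degree ([:-z,1:]*Q) = degree [:-z,1:] + degree Q" by (rule degree_mult_eq) (use Q0 in auto)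
  then have dG: "degree G = Suc (degree Q)" using Q by simp
  have "lead_coeff ([:-z,1:]*Q) = lead_coeff [:-z,1:] * lead_coeff Q" by (rule lead_coeff_mult)
  then have lc: "lead_coeff G = lead_coeff Q" using Q by simp
  have pw: "poly G w = (w - z) * poly Q w" unfolding Q poly_mult by simp
  have wz: "d < norm (w - z)" using Suc.prems(1) z by blast
  have lcpos: "0 < norm (lead_coeff Q)" using Q0 by simp
  show ?case
  proof (cases "degree Q = 0")
    case True
    then have "poly Q w = lead_coeff Q" by (simp add: poly_altdef)
    then show ?thesis using dG lc pw wz lcpos True
      by (simp add: norm_mult mult_strict_right_mono)
  next
    case False
    have rQ: "\<forall>z. poly Q z = 0 \<longrightarrow> d < norm (w - z)" using Suc.prems(1) Q by auto
    have IH: "norm (lead_coeff Q) * d ^ degree Q < norm (poly Q w)"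
      using Suc.hyps(1)[of Q] dG Suc.hyps(2) rQ Suc.prems(2) False by auto
    have "d * (norm (lead_coeff Q) * d ^ degree Q) < norm (w - z) * norm (poly Q w)"
      by (rule mult_strict_mono[OF wz IH]) (use Suc.prems(2) wz in auto)
    moreover have "norm (poly G w) = norm (w - z) * norm (poly Q w)" using pw by (simp add: norm_mult)
    ultimately show ?thesis using dG lc by (simp add: algebra_simps)
  qed
qed

lemma factor_bound:
  fixes f g h :: "int poly" and d n :: nat
  assumes fgh: "f = g * h" and dg: "0 < degree g"
    and roots: "\<And>z. poly (cp f) z = 0 \<Longrightarrow> norm z < \<alpha> \<or> norm z > \<beta>"
    and d1: "d > 0" and nb: "\<beta> - real d \<ge> real n" and na: "real n \<ge> \<alpha> + real d"
  shows "real d < \<bar>real_of_int (poly g (int n))\<bar>"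
proof -
  have rG: "\<forall>z. poly (cp g) z = 0 \<longrightarrow> real d < norm (of_nat n - z)"
  proof (intro allI impI)
    fix z assume "poly (cp g) z = 0"
    then have "poly (cp f) z = 0" using fgh by (simp add: cp_mult)
    then have "norm z < \<alpha> \<or> norm z > \<beta>" by (rule roots)
    moreover have "real n - norm z \<le> norm (of_nat n - z)"
      using norm_triangle_ineq2[of "of_nat n :: complex" z] by simp
    moreover have "norm z - real n \<le> norm (of_nat n - z)"
      using norm_triangle_ineq2[of z "of_nat n :: complex"] by (simp add: norm_minus_commute)
    ultimately show "real d < norm (of_nat n - z)" using nb na by linarith
  qed
  have A: "norm (lead_coeff (cp g)) * real d ^ degree (cp g) < norm (poly (cp g) (of_nat n))"
    by (rule prod_bound[OF rG]) (use dg in \<open>auto simp: cp_deg\<close>)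
  have B: "poly (cp g) (of_nat n) = of_int (poly g (int n))"
    using cp_poly_int[of g "int n"] by simp
  have C: "lead_coeff (cp g) = of_int (lead_coeff g)"
    by (simp add: cp_deg cp_coeff)
  have A': "\<bar>real_of_int (lead_coeff g)\<bar> * real d ^ degree g < \<bar>real_of_int (poly g (int n))\<bar>"
    using A unfolding B C unfolding cp_deg by (simp only: norm_of_int)
  have "g \<noteq> 0" using dg by auto
  then have "lead_coeff g \<noteq> 0" by simp
  then have "(1::int) \<le> \<bar>lead_coeff g\<bar>" by arith
  then have L: "1 \<le> \<bar>real_of_int (lead_coeff g)\<bar>" by linarith
  have P: "real d \<le> real d ^ degree g"
    using power_increasing[of 1 "degree g" "real d"] dg d1 by simp
  have "real d ^ degree g \<le> \<bar>real_of_int (lead_coeff g)\<bar> * real d ^ degree g"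
    using L by (simp add: mult_le_cancel_right1)
  then show ?thesis using A' P by linarith
qed

lemma arith_final:
  fixes a b q :: int and d :: nat
  assumes "real d < \<bar>real_of_int a\<bar>" "real d < \<bar>real_of_int b\<bar>"
    "\<bar>a * b\<bar> = int d * q" "q > 0" "q dvd a" "d > 0"
  shows False
proof -
  obtain u where u: "a = q * u" using assms(5) by (elim dvdE)
  then have "q * (\<bar>u\<bar> * \<bar>b\<bar>) = q * int d" using assms(3) assms(4) by (simp add: abs_mult algebra_simps)
  then have "\<bar>u\<bar> * \<bar>b\<bar> = int d" using assms(4) by simp
  then have "u \<noteq> 0" using assms(6) by auto
  then have "1 \<le> \<bar>u\<bar>" by arith
  then have "\<bar>b\<bar> \<le> \<bar>u\<bar> * \<bar>b\<bar>" by (simp add: mult_le_cancel_right1)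
  then have "\<bar>b\<bar> \<le> int d" using \<open>\<bar>u\<bar> * \<bar>b\<bar> = int d\<close> by simp
  then show False using assms(2) by linarith
qed

theorem corollary5:
  fixes f :: "int poly"
  assumes primitive: "content f = 1"
    and dom: "\<exists>(\<alpha>::real) (\<beta>::real) j. 0 < \<alpha> \<and> \<alpha> < \<beta> \<and> j \<le> degree f \<and>
           \<bar>real_of_int (coeff f j)\<bar> * \<alpha> ^ j >
           (\<Sum>i\<in>{0..degree f} - {j}. \<bar>real_of_int (coeff f i)\<bar> * \<beta> ^ i) \<and>
           (\<exists>(n::nat) (d::nat). n > 0 \<and> d > 0 \<and>
              \<beta> - real d \<ge> real n \<and> real n \<ge> \<alpha> + real d \<and>
              ((\<exists>p::int. prime p \<and> \<bar>poly f (int n)\<bar> = int d * p) \<or>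
               (\<exists>(p::int) (k::nat). prime p \<and> k > 0 \<and> \<bar>poly f (int n)\<bar> = int d * p ^ k \<and>
                  coprime (p ^ k) \<bar>poly (pderiv f) (int n)\<bar>)))"
  shows "irreducible f"
proof -
  obtain \<alpha> \<beta> :: real and j n d :: nat and q :: int where
    a0: "0 < \<alpha>" and ab: "\<alpha> < \<beta>" and jd: "j \<le> degree f"
    and dm: "\<bar>real_of_int (coeff f j)\<bar> * \<alpha> ^ j >
           (\<Sum>i\<in>{0..degree f} - {j}. \<bar>real_of_int (coeff f i)\<bar> * \<beta> ^ i)"
    and n0: "n > 0" and d0: "d > 0" and nb: "\<beta> - real d \<ge> real n" and na: "real n \<ge> \<alpha> + real d"
    and q0: "q > 1" and fq: "\<bar>poly f (int n)\<bar> = int d * q"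
    and split: "\<And>g h. f = g * h \<Longrightarrow> q dvd poly g (int n) \<or> q dvd poly h (int n)"
  proof -
    from dom obtain \<alpha> \<beta> j n d where
      a0: "0 < \<alpha>" and ab: "\<alpha> < \<beta>" and jd: "j \<le> degree f"
      and dm: "\<bar>real_of_int (coeff f j)\<bar> * \<alpha> ^ j >
           (\<Sum>i\<in>{0..degree f} - {j}. \<bar>real_of_int (coeff f i)\<bar> * \<beta> ^ i)"
      and n0: "n > 0" and d0: "d > 0" and nb: "\<beta> - real d \<ge> real n" and na: "real n \<ge> \<alpha> + real d"
      and disj: "(\<exists>p::int. prime p \<and> \<bar>poly f (int n)\<bar> = int d * p) \<or>
               (\<exists>(p::int) (k::nat). prime p \<and> k > 0 \<and> \<bar>poly f (int n)\<bar> = int d * p ^ k \<and>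
                  coprime (p ^ k) \<bar>poly (pderiv f) (int n)\<bar>)"
      by blast
    from disj show ?thesis
    proof
      assume "\<exists>p::int. prime p \<and> \<bar>poly f (int n)\<bar> = int d * p"
      then obtain p :: int where p: "prime p" "\<bar>poly f (int n)\<bar> = int d * p" by blast
      have "p > 1" using p(1) by (simp add: prime_gt_1_int)
      moreover have "p dvd poly g (int n) \<or> p dvd poly h (int n)" if "f = g * h" for g h
      proof -
        have "p dvd poly f (int n)" using p(2) by (metis dvd_abs_iff dvd_triv_right)
        then have "p dvd poly g (int n) * poly h (int n)" using that by simp
        then show ?thesis using that p(1) by (simp add: prime_dvd_mult_iff)
      qed
      ultimately show ?thesis
        using that[OF a0 ab jd dm n0 d0 nb na _ p(2)] by blast
    next
      assume "\<exists>(p::int) (k::nat). prime p \<and> k > 0 \<and> \<bar>poly f (int n)\<bar> = int d * p ^ k \<and>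
                  coprime (p ^ k) \<bar>poly (pderiv f) (int n)\<bar>"
      then obtain p :: int and k :: nat where p: "prime p" "k > 0" "\<bar>poly f (int n)\<bar> = int d * p ^ k"
        "coprime (p ^ k) \<bar>poly (pderiv f) (int n)\<bar>" by blast
      have p1: "p > 1" using p(1) by (simp add: prime_gt_1_int)
      then have "p ^ k > 1" using p(2) by simp
      moreover have "p ^ k dvd poly g (int n) \<or> p ^ k dvd poly h (int n)" if fgh: "f = g * h" for g h
      proof -
        define a where "a = poly g (int n)"
        define b where "b = poly h (int n)"
        have fab: "poly f (int n) = a * b" using fgh by (simp add: a_def b_def)
        have der: "poly (pderiv f) (int n) = a * poly (pderiv h) (int n) + b * poly (pderiv g) (int n)"
          using fgh by (simp add: pderiv_mult a_def b_def)
        have pk: "p ^ k dvd a * b" using p(3) fab by (metis dvd_abs_iff dvd_triv_right)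
        have "\<not> (p dvd a \<and> p dvd b)"
        proof
          assume "p dvd a \<and> p dvd b"
          then have "p dvd poly (pderiv f) (int n)" unfolding der by auto
          then have "p dvd \<bar>poly (pderiv f) (int n)\<bar>" by simp
          moreover have "p dvd p ^ k" using p(2) by (simp add: dvd_power)
          ultimately have "is_unit p" using p(4) coprime_common_divisor by blast
          then show False using p1 by simp
        qed
        then have "\<not> p dvd a \<or> \<not> p dvd b" by blast
        then show ?thesis
        proof
          assume "\<not> p dvd a"
          then have "coprime p a" by (rule prime_imp_coprime[OF p(1)])
          then have "coprime (p ^ k) a" by simp
          then have "p ^ k dvd b" using pk by (simp add: coprime_dvd_mult_right_iff)
          then show ?thesis by (simp add: b_def)
        next
          assume "\<not> p dvd b"
          then have "coprime p b" by (rule prime_imp_coprime[OF p(1)])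
          then have "coprime (p ^ k) b" by simp
          then have "p ^ k dvd a" using pk by (simp add: coprime_dvd_mult_left_iff)
          then show ?thesis by (simp add: a_def)
        qed
      qed
      ultimately show ?thesis
        using that[OF a0 ab jd dm n0 d0 nb na _ p(3)] by blast
    qed
  qed
  have roots: "\<And>z. poly (cp f) z = 0 \<Longrightarrow> norm z < \<alpha> \<or> norm z > \<beta>"
    using roots_annulus[OF jd dm a0] by blast
  have f0: "f \<noteq> 0" using primitive by auto
  have deg_pos: "0 < degree g" if fgh: "f = g * h" and nu: "\<not> is_unit g" for g h
  proof (rule ccontr)
    assume "\<not> 0 < degree g"
    then have dg: "degree g = 0" by simp
    have "content g * content h = 1" using primitive fgh by (simp add: content_mult)
    moreover have "0 \<le> content g" using normalize_content[of g] by (metis abs_ge_zero normalize_int_def)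
    ultimately have "content g = 1" by (simp add: zmult_eq_1_iff)
    moreover have "g = [:coeff g 0:]" using degree_0_id[OF dg] by simp
    ultimately have "\<bar>coeff g 0\<bar> = 1" by (metis content_const normalize_int_def)
    then have "coeff g 0 dvd 1" by (metis abs_dvd_iff dvd_refl)
    then have "is_unit g" using \<open>g = [:coeff g 0:]\<close> is_unit_poly_iff by blast
    with nu show False by simp
  qed
  show ?thesis
  proof (rule irreducibleI)
    show "f \<noteq> 0" by (rule f0)
    show "\<not> is_unit f"
    proof
      assume "is_unit f"
      then obtain c where c: "f = [:c:]" "is_unit c" using is_unit_poly_iff by blast
      then have "\<bar>poly f (int n)\<bar> = 1" by simp
      moreover have "1 * q \<le> int d * q" by (rule mult_right_mono) (use d0 q0 in auto)
      ultimately show False using fq q0 by linarith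
    qed
  next
    fix g h assume fgh: "f = g * h"
    show "is_unit g \<or> is_unit h"
    proof (rule ccontr)
      assume "\<not> (is_unit g \<or> is_unit h)"
      then have dg: "0 < degree g" and dh: "0 < degree h"
        using deg_pos[OF fgh] deg_pos[of h g] fgh by (auto simp: mult.commute)
      have bg: "real d < \<bar>real_of_int (poly g (int n))\<bar>"
        by (rule factor_bound[OF fgh dg roots d0 nb na])
      have bh: "real d < \<bar>real_of_int (poly h (int n))\<bar>"
        using factor_bound[of f h g, OF _ dh roots d0 nb na] fgh by (simp add: mult.commute)
      have prod: "\<bar>poly g (int n) * poly h (int n)\<bar> = int d * q" using fq fgh by simp
      from split[OF fgh] show False
      proof
        assume "q dvd poly g (int n)"
        then show False using arith_final[OF bg bh prod _ _ d0] q0 by simp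
      next
        assume "q dvd poly h (int n)"
        then show False using arith_final[OF bh bg _ _ _ d0, of q] prod q0 by (simp add: mult.commute)
      qed
    qed
  qed
qed

end
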